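(* Let $\phi\ge 0$, $\sigma>0$ with $\sigma\neq 1$, $\rho>0$ and $m>0$ be constants. Consider smooth functions $c(t)>0$, $s(t)>0$, $p(t)$ satisfying $$p=c^{-\sigma}s^{\phi(1-\sigma)},\qquad \dot s=ms-c,\qquad \dot p=\Big(\rho-m-\phi\frac{c}{s}\Big)p .$$ Then the following three quantities are constant in $t$ along every such solution: $$I_1=\frac{\rho\, p\, s\, e^{-\rho t}}{(\phi+1)(1-\sigma)}-e^{-\rho t}\Big[\frac{(cs^{\phi})^{1-\sigma}}{1-\sigma}+p(ms-c)\Big],$$ $$I_2=e^{\frac{(\rho-m\phi-m)(1-\sigma)}{\sigma}t}\Big[pc-\frac{(cs^{\phi})^{1-\sigma}}{1-\sigma}\Big],$$ $$I_3=p\,s^{-\phi}e^{(m\phi+m-\rho)t}.$$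
   Context: This system is the set of first-order optimality conditions for the optimal growth problem with environmental asset: maximize $\int_0^\infty \frac{(cs^\phi)^{1-\sigma}}{1-\sigma}e^{-\rho t}dt$ subject to $\dot s=ms-c$, with current value Hamiltonian $H=\frac{(cs^{\phi})^{1-\sigma}}{1-\sigma}+p(ms-c)$; here $s$ is the stock of environmental asset, $c$ consumption and $p$ the costate variable. *)

theory Defs
  imports "HOL-Analysis.Analysis"
begin

end

theory Submission
  imports Defs
begin

theorem mainTheorem1:
  fixes phi sigma rho m :: real
    and c s p :: "real \<Rightarrow> real"
  assumes phi: "phi \<ge> 0" and sig: "sigma > 0" "sigma \<noteq> 1"
    and rho: "rho > 0" and mpos: "m > 0"
    and c_pos: "\<And>t. c t > 0" and s_pos: "\<And>t. s t > 0"
    and c_diff: "\<And>t. c differentiable (at t)"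
    and p_eq: "\<And>t. p t = c t powr (- sigma) * s t powr (phi * (1 - sigma))"
    and s_ode: "\<And>t. (s has_real_derivative (m * s t - c t)) (at t)"
    and p_ode: "\<And>t. (p has_real_derivative ((rho - m - phi * c t / s t) * p t)) (at t)"
  shows "(\<forall>t1 t2.
      rho * p t1 * s t1 * exp (- rho * t1) / ((phi + 1) * (1 - sigma))
        - exp (- rho * t1) * ((c t1 * s t1 powr phi) powr (1 - sigma) / (1 - sigma)
                               + p t1 * (m * s t1 - c t1))
    = rho * p t2 * s t2 * exp (- rho * t2) / ((phi + 1) * (1 - sigma))
        - exp (- rho * t2) * ((c t2 * s t2 powr phi) powr (1 - sigma) / (1 - sigma)
                               + p t2 * (m * s t2 - c t2)))
    \<and> (\<forall>t1 t2.
      exp ((rho - m * phi - m) * (1 - sigma) / sigma * t1)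
        * (p t1 * c t1 - (c t1 * s t1 powr phi) powr (1 - sigma) / (1 - sigma))
    = exp ((rho - m * phi - m) * (1 - sigma) / sigma * t2)
        * (p t2 * c t2 - (c t2 * s t2 powr phi) powr (1 - sigma) / (1 - sigma)))
    \<and> (\<forall>t1 t2.
      p t1 * s t1 powr (- phi) * exp ((m * phi + m - rho) * t1)
    = p t2 * s t2 powr (- phi) * exp ((m * phi + m - rho) * t2))"
proof -
  define a where "a = m * phi + m - rho"
  define e where "e = (sigma - 1) / sigma"
  define K where "K = p 0 * s 0 powr (- phi) * exp (a * 0)"
  have sne: "sigma \<noteq> 0" using sig by auto
  have pp: "p t > 0" for t using p_eq[of t] c_pos[of t] s_pos[of t] by simp
  have I3d: "((\<lambda>t. p t * s t powr (- phi) * exp (a * t)) has_real_derivative 0) (at t)" for t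
  proof -
    have d1: "((\<lambda>t. p t * s t powr (- phi)) has_real_derivative
       ((rho - m - phi * c t / s t) * p t) * s t powr (- phi)
       + p t * ((- phi) * s t powr (- phi - of_nat 1) * (m * s t - c t))) (at t)"
      using DERIV_mult[OF p_ode[of t] DERIV_fun_powr[OF s_ode[of t] s_pos[of t], of "- phi"]] by (simp add: algebra_simps)
    have d2: "((\<lambda>t. exp (a * t)) has_real_derivative exp (a * t) * a) (at t)"
      by (auto intro!: derivative_eq_intros)
    have "((\<lambda>t. p t * s t powr (- phi) * exp (a * t)) has_real_derivative
       ((rho - m - phi * c t / s t) * p t) * s t powr (- phi) * exp (a * t)
       + p t * ((- phi) * s t powr (- phi - of_nat 1) * (m * s t - c t)) * exp (a * t)
       + p t * s t powr (- phi) * (exp (a * t) * a)) (at t)"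
      using DERIV_mult[OF d1 d2] by (simp add: algebra_simps)
    moreover have "((rho - m - phi * c t / s t) * p t) * s t powr (- phi) * exp (a * t)
       + p t * ((- phi) * s t powr (- phi - of_nat 1) * (m * s t - c t)) * exp (a * t)
       + p t * s t powr (- phi) * (exp (a * t) * a) = 0"
    proof -
      have "s t powr (- phi - of_nat 1) = s t powr (- phi) / s t"
        using s_pos[of t] by (simp add: powr_diff)
      then show ?thesis using s_pos[of t] by (simp add: a_def field_simps)
    qed
    ultimately show ?thesis by simp
  qed
  have F1: "p t * s t powr (- phi) * exp (a * t) = K" for t
    unfolding K_def using I3d by (intro DERIV_isconst_all) auto
  have Kpos: "K > 0" unfolding K_def using pp[of 0] s_pos[of 0] by simp
  have F3: "(c t * s t powr phi) powr (1 - sigma) = p t * c t" for t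
  proof -
    have "p t * c t = c t powr (- sigma) * c t powr 1 * s t powr (phi * (1 - sigma))"
      using p_eq[of t] c_pos[of t] by simp
    also have "\<dots> = c t powr (1 - sigma) * s t powr (phi * (1 - sigma))"
      by (simp only: powr_add[symmetric]) simp
    also have "\<dots> = (c t * s t powr phi) powr (1 - sigma)"
      using c_pos[of t] s_pos[of t] by (simp add: powr_mult powr_powr)
    finally show ?thesis by simp
  qed
  have F2: "p t * c t = (p t * s t powr (- phi)) powr e" for t
  proof -
    have "p t * s t powr (- phi) = c t powr (- sigma) * s t powr (- phi * sigma)"
      using p_eq[of t] s_pos[of t] by (simp add: powr_add[symmetric] algebra_simps)
    hence "(p t * s t powr (- phi)) powr e = c t powr (- sigma * e) * s t powr (- phi * sigma * e)"
      using c_pos[of t] s_pos[of t] by (simp add: powr_mult powr_powr)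
    also have "\<dots> = c t powr (1 - sigma) * s t powr (phi * (1 - sigma))"
    proof -
      have "- sigma * e = 1 - sigma" "- phi * sigma * e = phi * (1 - sigma)"
        using sne by (simp_all add: e_def field_simps)
      then show ?thesis by simp
    qed
    also have "\<dots> = (c t * s t powr phi) powr (1 - sigma)"
      using c_pos[of t] s_pos[of t] by (simp add: powr_mult powr_powr)
    finally show ?thesis using F3[of t] by simp
  qed
  have F4: "p t * c t = K powr e * exp (- a * e * t)" for t
  proof -
    have "p t * s t powr (- phi) = K * exp (- a * t)"
      using F1[of t] by (simp add: field_simps exp_minus)
    hence "(p t * s t powr (- phi)) powr e = K powr e * exp (- a * e * t)"
      using Kpos by (simp add: powr_mult exp_powr_real algebra_simps)
    then show ?thesis using F2[of t] by simp
  qed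
  have s1m: "1 - sigma \<noteq> 0" using sig by auto
  have phi1: "phi + 1 \<noteq> 0" using phi by auto
  have P3: "\<forall>t1 t2.
      p t1 * s t1 powr (- phi) * exp ((m * phi + m - rho) * t1)
    = p t2 * s t2 powr (- phi) * exp ((m * phi + m - rho) * t2)"
    using F1 by (simp add: a_def)
  have E2: "exp ((rho - m * phi - m) * (1 - sigma) / sigma * t)
        * (p t * c t - (c t * s t powr phi) powr (1 - sigma) / (1 - sigma))
        = K powr e * (1 - 1 / (1 - sigma))" for t
  proof -
    have "(rho - m * phi - m) * (1 - sigma) / sigma * t = a * e * t"
      using sne by (simp add: a_def e_def field_simps)
    then have "exp ((rho - m * phi - m) * (1 - sigma) / sigma * t) * exp (- a * e * t) = 1"
      by (simp add: exp_add[symmetric])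
    then show ?thesis unfolding F3 F4
      by (simp add: algebra_simps)
  qed
  have P2: "\<forall>t1 t2.
      exp ((rho - m * phi - m) * (1 - sigma) / sigma * t1)
        * (p t1 * c t1 - (c t1 * s t1 powr phi) powr (1 - sigma) / (1 - sigma))
    = exp ((rho - m * phi - m) * (1 - sigma) / sigma * t2)
        * (p t2 * c t2 - (c t2 * s t2 powr phi) powr (1 - sigma) / (1 - sigma))"
    using E2 by simp
  define A where "A = rho / ((phi + 1) * (1 - sigma)) - m"
  define B where "B = sigma / (1 - sigma)"
  define h where "h t = exp (- rho * t) * A * (p t * s t) - B * K powr e * exp ((- a * e - rho) * t)" for t
  have E1: "rho * p t * s t * exp (- rho * t) / ((phi + 1) * (1 - sigma))
        - exp (- rho * t) * ((c t * s t powr phi) powr (1 - sigma) / (1 - sigma)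
                               + p t * (m * s t - c t)) = h t" for t
  proof -
    have ee: "exp ((- a * e - rho) * t) = exp (- rho * t) * exp (- a * e * t)"
      by (simp add: exp_add[symmetric] algebra_simps)
    have "rho * p t * s t * exp (- rho * t) / ((phi + 1) * (1 - sigma))
        - exp (- rho * t) * ((c t * s t powr phi) powr (1 - sigma) / (1 - sigma)
                               + p t * (m * s t - c t))
        = exp (- rho * t) * (A * (p t * s t) - B * (p t * c t))"
      unfolding F3 A_def B_def using s1m phi1 by (simp add: field_simps)
    also have "\<dots> = h t" unfolding h_def ee F4 by (simp add: algebra_simps)
    finally show ?thesis .
  qed
  have hd: "(h has_real_derivative 0) (at t)" for t
  proof -
    have dps: "((\<lambda>t. p t * s t) has_real_derivative rho * (p t * s t) - (phi + 1) * (p t * c t)) (at t)"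
      apply (rule DERIV_cong[OF DERIV_mult[OF p_ode[of t] s_ode[of t]]])
      using s_pos[of t] by (simp add: field_simps)
    have de1: "((\<lambda>t. exp (- rho * t)) has_real_derivative exp (- rho * t) * (- rho)) (at t)"
      by (auto intro!: derivative_eq_intros)
    have de2: "((\<lambda>t. exp ((- a * e - rho) * t)) has_real_derivative exp ((- a * e - rho) * t) * (- a * e - rho)) (at t)"
      by (auto intro!: derivative_eq_intros)
    have "(h has_real_derivative
        (exp (- rho * t) * (- rho) * A * (p t * s t) + exp (- rho * t) * A * (rho * (p t * s t) - (phi + 1) * (p t * c t)))
        - B * K powr e * (exp ((- a * e - rho) * t) * (- a * e - rho))) (at t)"
      unfolding h_def
      using DERIV_diff[OF DERIV_mult[OF DERIV_cmult[OF de1, of A] dps] DERIV_cmult[OF de2, of "B * K powr e"]]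
      by (simp add: algebra_simps)
    moreover have "(exp (- rho * t) * (- rho) * A * (p t * s t) + exp (- rho * t) * A * (rho * (p t * s t) - (phi + 1) * (p t * c t)))
        - B * K powr e * (exp ((- a * e - rho) * t) * (- a * e - rho)) = 0"
    proof -
      have ee: "exp ((- a * e - rho) * t) = exp (- rho * t) * exp (- a * e * t)"
        by (simp add: exp_add[symmetric] algebra_simps)
      have key: "- A * (phi + 1) + B * (a * e + rho) = 0"
      proof -
        have "- A * (phi + 1) = - rho / (1 - sigma) + m * (phi + 1)"
          using s1m phi1 by (simp add: A_def divide_simps mult.assoc)
        moreover have "B * (a * e + rho) = rho / (1 - sigma) - m * (phi + 1)"
          using s1m sne by (simp add: B_def a_def e_def field_simps)
        ultimately show ?thesis by simp
      qed
      have "(exp (- rho * t) * (- rho) * A * (p t * s t) + exp (- rho * t) * A * (rho * (p t * s t) - (phi + 1) * (p t * c t)))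
        - B * K powr e * (exp ((- a * e - rho) * t) * (- a * e - rho))
        = exp (- rho * t) * K powr e * exp (- a * e * t) * (- A * (phi + 1) + B * (a * e + rho))"
        unfolding ee F4 by (simp add: algebra_simps)
      then show ?thesis using key by simp
    qed
    ultimately show ?thesis by simp
  qed
  have P1: "h t1 = h t2" for t1 t2 using hd by (intro DERIV_isconst_all) auto
  show ?thesis using P1 P2 P3 unfolding E1 by blast
qed

end
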